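(* The matrix $$U_6=\tfrac12 S_0\otimes\left(I_2\otimes I_2+\sigma_1\otimes\sigma_1+\sigma_2\otimes\sigma_2+\sigma_3\otimes\sigma_3\right)+\tfrac{1}{\sqrt2}S_3\otimes\left(I_2\otimes\sigma_1+\sigma_2\otimes\sigma_3\right)$$ on $\mathbb{C}^2\otimes\mathbb{C}^2\otimes\mathbb{C}^2$ is unitary and $\mathrm{sr}(U_6)=6$.
   Context: $S_0=\begin{bmatrix}1&0\\0&0\end{bmatrix}$, $S_1=\begin{bmatrix}0&1\\0&0\end{bmatrix}$, $S_2=\begin{bmatrix}0&0\\1&0\end{bmatrix}$, $S_3=\begin{bmatrix}0&0\\0&1\end{bmatrix}$. $I_2$ is the $2\times2$ identity and $\sigma_1=\begin{bmatrix}0&1\\1&0\end{bmatrix}$, $\sigma_2=\begin{bmatrix}0&-i\\i&0\end{bmatrix}$, $\sigma_3=\begin{bmatrix}1&0\\0&-1\end{bmatrix}$ are the Pauli matrices. For a matrix $U$ on $\mathbb{C}^2\otimes\mathbb{C}^2\otimes\mathbb{C}^2$ (systems $A,B,C$), its Schmidt rank $\mathrm{sr}(U)$ is the least integer $r$ such that $U=\sum_{j=1}^r A_j\otimes B_j\otimes C_j$ with $A_j,B_j,C_j$ complex $2\times 2$ matrices (i.e. the tensor rank of $U$). *)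

theory Defs
  imports "HOL-Analysis.Analysis"
begin

text \<open>2x2 complex matrices are elements of complex^2^2; row/column index 1 is the
first basis vector, index 2 the second.\<close>

definition mat2 :: "complex \<Rightarrow> complex \<Rightarrow> complex \<Rightarrow> complex \<Rightarrow> complex^2^2" where
  "mat2 a b c d = (\<chi> i j. if i = 1 then (if j = 1 then a else b) else (if j = 1 then c else d))"

definition S0 :: "complex^2^2" where "S0 = mat2 1 0 0 0"
definition S1 :: "complex^2^2" where "S1 = mat2 0 1 0 0"
definition S2 :: "complex^2^2" where "S2 = mat2 0 0 1 0"
definition S3 :: "complex^2^2" where "S3 = mat2 0 0 0 1"
definition I2 :: "complex^2^2" where "I2 = mat2 1 0 0 1"
definition sigma1 :: "complex^2^2" where "sigma1 = mat2 0 1 1 0"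
definition sigma2 :: "complex^2^2" where "sigma2 = mat2 0 (-\<i>) \<i> 0"
definition sigma3 :: "complex^2^2" where "sigma3 = mat2 1 0 0 (-1)"

text \<open>Operators on C^2 (x) C^2 (x) C^2 (systems A,B,C) are matrices indexed by triples.\<close>
type_synonym op3 = "complex^(2\<times>2\<times>2)^(2\<times>2\<times>2)"

definition tensor2 :: "complex^2^2 \<Rightarrow> complex^2^2 \<Rightarrow> complex^(2\<times>2)^(2\<times>2)" where
  "tensor2 B C = (\<chi> i j. B $ fst i $ fst j * C $ snd i $ snd j)"

definition tensor3 :: "complex^2^2 \<Rightarrow> complex^2^2 \<Rightarrow> complex^2^2 \<Rightarrow> op3" where
  "tensor3 A B C = (\<chi> i j. A $ fst i $ fst j * B $ fst (snd i) $ fst (snd j) * C $ snd (snd i) $ snd (snd j))"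

definition tensor_1_2 :: "complex^2^2 \<Rightarrow> complex^(2\<times>2)^(2\<times>2) \<Rightarrow> op3" where
  "tensor_1_2 A M = (\<chi> i j. A $ fst i $ fst j * M $ snd i $ snd j)"

definition cadjoint :: "complex^'n^'m \<Rightarrow> complex^'m^'n" where
  "cadjoint U = (\<chi> i j. cnj (U $ j $ i))"

definition unitary_mat :: "complex^'n^'n \<Rightarrow> bool" where
  "unitary_mat U \<longleftrightarrow> U ** cadjoint U = mat 1 \<and> cadjoint U ** U = mat 1"

definition schmidt_rank :: "op3 \<Rightarrow> nat" where
  "schmidt_rank U = (LEAST r. \<exists>A B C :: nat \<Rightarrow> complex^2^2.
       U = (\<Sum>j<r. tensor3 (A j) (B j) (C j)))"

definition U6 :: op3 where
  "U6 = (1/2) *\<^sub>R tensor_1_2 S0 (tensor2 I2 I2 + tensor2 sigma1 sigma1 + tensor2 sigma2 sigma2 + tensor2 sigma3 sigma3)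
       + (1 / sqrt 2) *\<^sub>R tensor_1_2 S3 (tensor2 I2 sigma1 + tensor2 sigma2 sigma3)"

end

theory Submission
  imports Defs
begin


lemma two_cases: "(x::2) = 1 \<or> x = 2" using exhaust_2 by auto

definition rt :: complex where "rt = complex_of_real (1/sqrt 2)"

lemma rt_cnj[simp]: "cnj rt = rt" by (simp add: rt_def)
lemma rt_sq[simp]: "rt * rt = 1/2" "rt * (rt * x) = x/2"
proof -
  show 1: "rt * rt = 1/2" unfolding rt_def
  proof -
    have "complex_of_real (1/sqrt 2) * complex_of_real (1/sqrt 2) = complex_of_real (1/sqrt 2 * (1/sqrt 2))"
      by (simp only: of_real_mult)
    also have "1/sqrt 2 * (1/sqrt 2) = (1/2::real)" by simp
    finally show "complex_of_real (1/sqrt 2) * complex_of_real (1/sqrt 2) = 1/2" by simp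
  qed
  show "rt * (rt * x) = x/2" by (simp add: mult.assoc[symmetric] 1)
qed

definition U6f :: "2\<times>2\<times>2 \<Rightarrow> 2\<times>2\<times>2 \<Rightarrow> complex" where
 "U6f i j = (case i of (a1,b1,c1) \<Rightarrow> case j of (a2,b2,c2) \<Rightarrow>
   if a1 = 1 \<and> a2 = 1 then (if b1 = c2 \<and> c1 = b2 then 1 else 0)
   else if a1 = 2 \<and> a2 = 2 then rt * (I2$b1$b2 * sigma1$c1$c2 + sigma2$b1$b2 * sigma3$c1$c2)
   else 0)"

lemma mat2_simps[simp]: "mat2 a b c d $ 1 $ 1 = a" "mat2 a b c d $ 1 $ 2 = b"
  "mat2 a b c d $ 2 $ 1 = c" "mat2 a b c d $ 2 $ 2 = d"
  by (simp_all add: mat2_def)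

lemma scaleR_entry[simp]: "((r::real) *\<^sub>R (M::complex^'a^'b)) $ i $ j = complex_of_real r * M$i$j"
  by (simp only: vector_scaleR_component) (simp add: scaleR_conv_of_real)

lemma U6_entry: "U6 $ i $ j = U6f i j"
proof -
  have "\<forall>a1 b1 c1 a2 b2 c2. U6 $ (a1,b1,c1) $ (a2,b2,c2) = U6f (a1,b1,c1) (a2,b2,c2)"
    unfolding forall_2
    by (simp add: U6_def U6f_def tensor_1_2_def tensor2_def S0_def S3_def I2_def sigma1_def sigma2_def sigma3_def
        rt_def) (simp add: scaleR_conv_of_real)
  then show ?thesis by (cases i; cases j) auto
qed



lemma U6f_tab[simp]:
  "U6f (1,1,1) (1,1,1) = 1"
  "U6f (1,1,1) (1,1,2) = 0"
  "U6f (1,1,1) (1,2,1) = 0"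
  "U6f (1,1,1) (1,2,2) = 0"
  "U6f (1,1,1) (2,1,1) = 0"
  "U6f (1,1,1) (2,1,2) = 0"
  "U6f (1,1,1) (2,2,1) = 0"
  "U6f (1,1,1) (2,2,2) = 0"
  "U6f (1,1,2) (1,1,1) = 0"
  "U6f (1,1,2) (1,1,2) = 0"
  "U6f (1,1,2) (1,2,1) = 1"
  "U6f (1,1,2) (1,2,2) = 0"
  "U6f (1,1,2) (2,1,1) = 0"
  "U6f (1,1,2) (2,1,2) = 0"
  "U6f (1,1,2) (2,2,1) = 0"
  "U6f (1,1,2) (2,2,2) = 0"
  "U6f (1,2,1) (1,1,1) = 0"
  "U6f (1,2,1) (1,1,2) = 1"
  "U6f (1,2,1) (1,2,1) = 0"
  "U6f (1,2,1) (1,2,2) = 0"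
  "U6f (1,2,1) (2,1,1) = 0"
  "U6f (1,2,1) (2,1,2) = 0"
  "U6f (1,2,1) (2,2,1) = 0"
  "U6f (1,2,1) (2,2,2) = 0"
  "U6f (1,2,2) (1,1,1) = 0"
  "U6f (1,2,2) (1,1,2) = 0"
  "U6f (1,2,2) (1,2,1) = 0"
  "U6f (1,2,2) (1,2,2) = 1"
  "U6f (1,2,2) (2,1,1) = 0"
  "U6f (1,2,2) (2,1,2) = 0"
  "U6f (1,2,2) (2,2,1) = 0"
  "U6f (1,2,2) (2,2,2) = 0"
  "U6f (2,1,1) (1,1,1) = 0"
  "U6f (2,1,1) (1,1,2) = 0"
  "U6f (2,1,1) (1,2,1) = 0"
  "U6f (2,1,1) (1,2,2) = 0"
  "U6f (2,1,1) (2,1,1) = 0"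
  "U6f (2,1,1) (2,1,2) = rt"
  "U6f (2,1,1) (2,2,1) = - (\<i> * rt)"
  "U6f (2,1,1) (2,2,2) = 0"
  "U6f (2,1,2) (1,1,1) = 0"
  "U6f (2,1,2) (1,1,2) = 0"
  "U6f (2,1,2) (1,2,1) = 0"
  "U6f (2,1,2) (1,2,2) = 0"
  "U6f (2,1,2) (2,1,1) = rt"
  "U6f (2,1,2) (2,1,2) = 0"
  "U6f (2,1,2) (2,2,1) = 0"
  "U6f (2,1,2) (2,2,2) = \<i> * rt"
  "U6f (2,2,1) (1,1,1) = 0"
  "U6f (2,2,1) (1,1,2) = 0"
  "U6f (2,2,1) (1,2,1) = 0"
  "U6f (2,2,1) (1,2,2) = 0"
  "U6f (2,2,1) (2,1,1) = \<i> * rt"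
  "U6f (2,2,1) (2,1,2) = 0"
  "U6f (2,2,1) (2,2,1) = 0"
  "U6f (2,2,1) (2,2,2) = rt"
  "U6f (2,2,2) (1,1,1) = 0"
  "U6f (2,2,2) (1,1,2) = 0"
  "U6f (2,2,2) (1,2,1) = 0"
  "U6f (2,2,2) (1,2,2) = 0"
  "U6f (2,2,2) (2,1,1) = 0"
  "U6f (2,2,2) (2,1,2) = - (\<i> * rt)"
  "U6f (2,2,2) (2,2,1) = rt"
  "U6f (2,2,2) (2,2,2) = 0"
  by (simp_all add: U6f_def I2_def sigma1_def sigma2_def sigma3_def)

lemma sum_prod_UNIV: "(\<Sum>x\<in>(UNIV::('a::finite\<times>'b::finite) set). f x) = (\<Sum>a\<in>UNIV. \<Sum>b\<in>UNIV. f (a,b))"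
  by (subst sum.cartesian_product) (simp add: case_prod_eta)

lemma sum8: "(\<Sum>x\<in>(UNIV::(2\<times>2\<times>2) set). f x) =
  f (1,1,1) + f (1,1,2) + f (1,2,1) + f (1,2,2) + f (2,1,1) + f (2,1,2) + f (2,2,1) + f (2,2,2)"
  by (simp only: sum_prod_UNIV sum_2 add.assoc)

lemma ii: "\<i> * (\<i> * x) = - x" by (simp add: mult.assoc[symmetric])

lemma unit1: "U6 ** cadjoint U6 = mat 1"
proof -
  have "\<forall>a1 b1 c1 a2 b2 c2. (\<Sum>k\<in>UNIV. U6f (a1,b1,c1) k * cnj (U6f (a2,b2,c2) k)) = (if (a1,b1,c1) = (a2,b2,c2) then 1 else 0)"
    unfolding forall_2 sum8
    by (simp add: mult_ac ii)
  then show ?thesis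
    by (simp add: vec_eq_iff matrix_matrix_mult_def cadjoint_def U6_entry mat_def)
qed


lemma unitU6: "unitary_mat U6"
  using unit1 matrix_left_right_inverse unitary_mat_def by blast


definition Yz :: "complex^'n \<Rightarrow> complex^'n \<Rightarrow> complex" where
  "Yz y z = (\<Sum>i\<in>UNIV. y$i * z$i)"

lemma mv_sum:
  fixes A :: "complex^'n^'n"
  assumes "\<And>u v. A $ u $ v = (\<Sum>k\<in>S. a k * x k $ u * y k $ v)"
  shows "(A *v z) $ u = (\<Sum>k\<in>S. a k * x k $ u * Yz (y k) z)"
proof -
  have "(A *v z) $ u = (\<Sum>v\<in>UNIV. (\<Sum>k\<in>S. a k * x k $ u * y k $ v) * z $ v)"
    by (simp add: matrix_vector_mult_def assms)
  also have "\<dots> = (\<Sum>v\<in>UNIV. \<Sum>k\<in>S. a k * x k $ u * (y k $ v * z $ v))"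
    by (simp add: sum_distrib_right mult.assoc)
  also have "\<dots> = (\<Sum>k\<in>S. \<Sum>v\<in>UNIV. a k * x k $ u * (y k $ v * z $ v))"
    by (rule sum.swap)
  also have "\<dots> = (\<Sum>k\<in>S. a k * x k $ u * Yz (y k) z)"
    by (simp add: Yz_def sum_distrib_left)
  finally show ?thesis .
qed

lemma X_sum:
  fixes x :: "nat \<Rightarrow> complex^'n"
  assumes g: "bij_betw g (UNIV::'n set) S"
  shows "((\<chi> i k. x (g k) $ i) *v (\<chi> k. f (g k))) $ u = (\<Sum>k\<in>S. x k $ u * f k)"
proof -
  have "((\<chi> i k. x (g k) $ i) *v (\<chi> k. f (g k))) $ u = (\<Sum>k\<in>UNIV. x (g k) $ u * f (g k))"
    by (simp add: matrix_vector_mult_def)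
  also have "\<dots> = (\<Sum>k\<in>S. x k $ u * f k)"
    using sum.reindex_bij_betw[OF g, of "\<lambda>k. x k $ u * f k"] by simp
  finally show ?thesis .
qed

lemma core:
  fixes N :: "complex^'n^'n" and x y :: "nat \<Rightarrow> complex^'n" and al be :: "nat \<Rightarrow> complex"
  assumes card: "CARD('n) = 4"
  and hI: "\<And>u v. (if u = v then 1 else 0) = (\<Sum>k<5. al k * x k $ u * y k $ v)"
  and hN: "\<And>u v. N $ u $ v = (\<Sum>k<5. be k * x k $ u * y k $ v)"
  and hNN: "N ** N = 0"
  and hu: "\<And>z::complex^'n. \<exists>u. Yz z u = 0 \<and> Yz z (N *v u) = 0 \<and> N *v u \<noteq> 0"
  shows False
proof -
  obtain j0 where j0: "j0 < 5" "be j0 \<noteq> 0"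
  proof (cases "\<exists>j<5. be j \<noteq> 0")
    case True then show ?thesis using that by blast
  next
    case False
    then have "N = 0" by (simp add: vec_eq_iff hN)
    then show ?thesis using hu[of 0] by simp
  qed
  define lam where "lam = - al j0 / be j0"
  define c where "c k = al k + lam * be k" for k
  have cj0: "c j0 = 0" using j0 by (simp add: c_def lam_def)
  define S where "S = {..<5::nat} - {j0}"
  have finS: "finite S" by (simp add: S_def)
  have cardS: "card S = 4" using j0 by (simp add: S_def)
  define Lm :: "complex^'n^'n" where "Lm = (\<chi> u v. lam * N$u$v)"
  define M :: "complex^'n^'n" where "M = mat 1 + Lm"
  define M' :: "complex^'n^'n" where "M' = mat 1 - Lm"
  define D :: "complex^'n^'n" where "D = (\<chi> u v. \<Sum>k\<in>S. be k * x k $ u * y k $ v)"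
  have NNv: "N *v (N *v z) = 0" for z
    by (simp add: matrix_vector_mul_assoc hNN)
  have Lmv: "Lm *v z = lam *s (N *v z)" for z
    by (simp add: vec_eq_iff Lm_def matrix_vector_mult_def sum_distrib_left mult.assoc)
  have Mv0: "M *v z = z + lam *s (N *v z)" for z
    by (simp add: M_def matrix_vector_mult_add_rdistrib Lmv)
  have M'v: "M' *v z = z - lam *s (N *v z)" for z
    by (simp add: M'_def matrix_vector_mult_diff_rdistrib Lmv)
  have MM'v: "M *v (M' *v z) = z" for z
    unfolding Mv0 M'v
    by (simp add: matrix_vector_mult_diff_distrib vector_scalar_commute NNv vector_ssub_ldistrib)
  have MM': "M ** M' = mat 1"
    unfolding matrix_eq by (simp add: matrix_vector_mul_assoc[symmetric] MM'v)
  have hM: "M $ u $ v = (\<Sum>k<5. c k * x k $ u * y k $ v)" for u v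
  proof -
    have "M $ u $ v = (\<Sum>k<5. al k * x k $ u * y k $ v) + lam * (\<Sum>k<5. be k * x k $ u * y k $ v)"
      by (simp add: M_def Lm_def mat_def hI[symmetric] hN[symmetric])
    also have "\<dots> = (\<Sum>k<5. c k * x k $ u * y k $ v)"
      by (simp add: c_def sum_distrib_left sum.distrib[symmetric] algebra_simps)
    finally show ?thesis .
  qed
  have hMS: "M $ u $ v = (\<Sum>k\<in>S. c k * x k $ u * y k $ v)" for u v
  proof -
    have "(\<Sum>k<5. c k * x k $ u * y k $ v) = c j0 * x j0 $ u * y j0 $ v + (\<Sum>k\<in>S. c k * x k $ u * y k $ v)"
      unfolding S_def using j0 by (subst sum.remove[of _ j0]) auto
    then show ?thesis using hM cj0 by simp
  qed
  have hND: "N $ u $ v = D $ u $ v + be j0 * x j0 $ u * y j0 $ v" for u v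
  proof -
    have "(\<Sum>k<5. be k * x k $ u * y k $ v) = be j0 * x j0 $ u * y j0 $ v + (\<Sum>k\<in>S. be k * x k $ u * y k $ v)"
      unfolding S_def using j0 by (subst sum.remove[of _ j0]) auto
    then show ?thesis using hN by (simp add: D_def)
  qed
  have NvD: "(N *v z) $ i = (D *v z) $ i + be j0 * x j0 $ i * Yz (y j0) z" for z i
    by (simp add: matrix_vector_mult_def hND Yz_def algebra_simps sum.distrib sum_distrib_left)
  define E where "E = M' ** D"
  have ME: "M ** E = D" by (simp add: E_def matrix_mul_assoc MM')
  obtain g where g: "bij_betw g (UNIV::'n set) S"
    using finite_same_card_bij[of "UNIV::'n set" S] finS cardS card by auto
  define X :: "complex^'n^'n" where "X = (\<chi> i k. x (g k) $ i)"
  define Y :: "complex^'n^'n" where "Y = (\<chi> i k. y (g k) $ i)"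
  define Cd :: "complex^'n^'n" where "Cd = (\<chi> i j. if i = j then c (g i) else 0)"
  have Mfact: "M = X ** Cd ** transpose Y"
  proof -
    have "(X ** Cd ** transpose Y) $ u $ v = (\<Sum>k\<in>UNIV. x (g k) $ u * c (g k) * y (g k) $ v)" for u v
      by (simp add: X_def Y_def Cd_def matrix_matrix_mult_def transpose_def if_distrib if_distribR cong: if_cong)
    also have "\<dots> u v = (\<Sum>k\<in>S. c k * x k $ u * y k $ v)" for u v
      using sum.reindex_bij_betw[OF g, of "\<lambda>k. x k $ u * c k * y k $ v"] by (simp add: ac_simps)
    finally show ?thesis by (simp add: vec_eq_iff hMS)
  qed
  have "det M * det M' = 1"
    using MM' by (metis det_I det_mul)
  then have dM: "det M \<noteq> 0" by auto
  have dM2: "det M = det X * (\<Prod>i\<in>UNIV. c (g i)) * det Y"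
    unfolding Mfact det_mul det_transpose
    by (subst det_diagonal[of Cd]) (auto simp: Cd_def)
  have cnz: "c (g k) \<noteq> 0" for k using dM dM2 by auto
  have "invertible X" using dM dM2 by (simp add: invertible_det_nz)
  then obtain Xi where Xi: "Xi ** X = mat 1" unfolding invertible_def by blast
  have Xinj: "X *v a = X *v b \<Longrightarrow> a = b" for a b
    by (metis Xi matrix_vector_mul_assoc matrix_vector_mul_lid)
  have Mv: "M *v z = X *v (\<chi> k. c (g k) * Yz (y (g k)) z)" for z
  proof -
    have "(M *v z) $ u = (\<Sum>k\<in>S. c k * x k $ u * Yz (y k) z)" for u
      by (rule mv_sum[OF hMS])
    then show ?thesis unfolding X_def vec_eq_iff
      using X_sum[OF g, of x "\<lambda>k. c k * Yz (y k) z"] by (simp add: ac_simps)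
  qed
  have Dv: "D *v z = X *v (\<chi> k. be (g k) * Yz (y (g k)) z)" for z
  proof -
    have "(D *v z) $ u = (\<Sum>k\<in>S. be k * x k $ u * Yz (y k) z)" for u
      by (rule mv_sum) (simp add: D_def)
    then show ?thesis unfolding X_def vec_eq_iff
      using X_sum[OF g, of x "\<lambda>k. be k * Yz (y k) z"] by (simp add: ac_simps)
  qed
  have claim1: "E *v w = 0" if "E *v (E *v w) = 0" for w
  proof -
    define v where "v = E *v w"
    have Ev: "E *v v = 0" using that v_def by simp
    have "D *v v = M *v (E *v v)" by (simp add: matrix_vector_mul_assoc ME)
    then have Dv0: "D *v v = 0" using Ev by simp
    have Mvv: "M *v v = D *v w" by (simp add: v_def matrix_vector_mul_assoc ME)
    have e1: "(\<chi> k. be (g k) * Yz (y (g k)) v) = (0::complex^'n)"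
      apply (rule Xinj) using Dv0 Dv[of v] by simp
    have e2: "(\<chi> k. c (g k) * Yz (y (g k)) v) = (\<chi> k. be (g k) * Yz (y (g k)) w)"
      apply (rule Xinj) using Mvv Mv[of v] Dv[of w] by simp
    have p0: "Yz (y (g k)) v = 0" for k
    proof -
      let ?p = "Yz (y (g k)) v" and ?q = "Yz (y (g k)) w" and ?b = "be (g k)" and ?c = "c (g k)"
      have a1: "?b * ?p = 0" using e1 by (simp add: vec_eq_iff)
      have a2: "?c * ?p = ?b * ?q" using e2 by (simp add: vec_eq_iff)
      have "?b * ?b * ?q = ?c * (?b * ?p)" using a2 by (simp add: algebra_simps)
      then have "?b * ?q = 0" using a1 by simp
      then have "?c * ?p = 0" using a2 by simp
      then show ?thesis using cnz by simp
    qed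
    have z0: "(\<chi> k. c (g k) * Yz (y (g k)) v) = (0::complex^'n)" by (simp add: vec_eq_iff p0)
    have "M *v v = 0" by (simp only: Mv z0 matrix_vector_mult_0_right)
    then have "M' *v (M *v v) = 0" by simp
    then have "v = 0" using MM'
      by (metis matrix_left_right_inverse matrix_vector_mul_assoc matrix_vector_mul_lid)
    then show ?thesis using v_def by simp
  qed
  obtain u where u: "Yz (y j0) u = 0" "Yz (y j0) (N *v u) = 0" "N *v u \<noteq> 0"
    using hu by blast
  have Du: "D *v u = N *v u" using NvD[of u] u(1) by (simp add: vec_eq_iff)
  have DNu: "D *v (N *v u) = 0" using NvD[of "N *v u"] u(2) NNv[of u] by (simp add: vec_eq_iff)
  have Eu: "E *v u = N *v u"
    by (simp add: E_def matrix_vector_mul_assoc[symmetric] Du M'v NNv)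
  have "E *v (E *v u) = 0"
    unfolding Eu by (simp add: E_def matrix_vector_mul_assoc[symmetric] DNu M'v)
  then have "E *v u = 0" by (rule claim1)
  then show False using Eu u(3) by simp
qed



definition Ncon :: "complex^(2\<times>2)^(2\<times>2)" where
  "Ncon = (\<chi> u v. U6 $ (2, snd u, fst v) $ (2, fst u, snd v))"

lemma sum4: "(\<Sum>x\<in>(UNIV::(2\<times>2) set). f x) = f (1,1) + f (1,2) + f (2,1) + f (2,2)"
  by (simp only: sum_prod_UNIV sum_2 add.assoc)

lemma Ncon_entry: "Ncon $ (u1,u2) $ (v1,v2) =
  rt * ((if u1 = u2 then 1 else 0) * (if v1 = v2 then 0 else 1)
      + (if u1 = 1 \<and> u2 = 2 then \<i> else if u1 = 2 \<and> u2 = 1 then -\<i> else 0) *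
        (if v1 = 1 \<and> v2 = 1 then 1 else if v1 = 2 \<and> v2 = 2 then -1 else 0))"
proof -
  have "\<forall>u1 u2 v1 v2. Ncon $ (u1,u2) $ (v1,v2) =
  rt * ((if u1 = u2 then 1 else 0) * (if v1 = v2 then 0 else 1)
      + (if u1 = 1 \<and> u2 = 2 then \<i> else if u1 = 2 \<and> u2 = 1 then -\<i> else 0) *
        (if v1 = 1 \<and> v2 = 1 then 1 else if v1 = 2 \<and> v2 = 2 then -1 else 0))"
    unfolding forall_2 by (simp add: Ncon_def U6_entry U6f_def I2_def sigma1_def sigma2_def sigma3_def)
  then show ?thesis by blast
qed

lemma NN: "Ncon ** Ncon = 0"
proof -
  have "\<forall>u1 u2 v1 v2. (\<Sum>w\<in>UNIV. Ncon $ (u1,u2) $ w * Ncon $ w $ (v1,v2)) = 0"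
    unfolding forall_2 sum4 by (simp add: Ncon_entry algebra_simps)
  then show ?thesis by (simp add: vec_eq_iff matrix_matrix_mult_def)
qed

lemma Nv: "(Ncon *v w) $ (u1,u2) = rt * ((if u1 = u2 then 1 else 0) * (w$(1,2) + w$(2,1))
      + (if u1 = 1 \<and> u2 = 2 then \<i> else if u1 = 2 \<and> u2 = 1 then -\<i> else 0) * (w$(1,1) - w$(2,2)))"
  by (simp add: matrix_vector_mult_def sum4 Ncon_entry algebra_simps)

definition mk4 :: "complex \<Rightarrow> complex \<Rightarrow> complex \<Rightarrow> complex \<Rightarrow> complex^(2\<times>2)" where
  "mk4 a b c d = (\<chi> u. if u = (1,1) then a else if u = (1,2) then b else if u = (2,1) then c else d)"

lemma mk4_simps[simp]: "mk4 a b c d $ (1,1) = a" "mk4 a b c d $ (1,2) = b" "mk4 a b c d $ (2,1) = c" "mk4 a b c d $ (2,2) = d"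
  by (simp_all add: mk4_def)

lemma rt_nz[simp]: "rt \<noteq> 0" by (simp add: rt_def)

lemma hu_gen:
  fixes z :: "complex^(2\<times>2)"
  assumes st: "s \<noteq> 0 \<or> t \<noteq> 0"
  and e1: "z$(1,1) * (t+q) + z$(1,2) * (s+p) - z$(2,1) * p + z$(2,2) * q = 0"
  and e2: "s * (z$(1,1) + z$(2,2)) + \<i> * t * (z$(1,2) - z$(2,1)) = 0"
  shows "\<exists>w. Yz z w = 0 \<and> Yz z (Ncon *v w) = 0 \<and> Ncon *v w \<noteq> 0"
proof (intro exI conjI)
  let ?w = "mk4 (t+q) (s+p) (-p) q"
  show "Yz z ?w = 0" using e1 by (simp add: Yz_def sum4 algebra_simps)
  have "Yz z (Ncon *v ?w) = rt * (s * (z$(1,1) + z$(2,2)) + \<i> * t * (z$(1,2) - z$(2,1)))"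
    by (simp add: Yz_def sum4 Nv algebra_simps)
  then show "Yz z (Ncon *v ?w) = 0" using e2 by simp
  show "Ncon *v ?w \<noteq> 0"
  proof
    assume h: "Ncon *v ?w = 0"
    have "(Ncon *v ?w) $ (1,1) = 0" "(Ncon *v ?w) $ (1,2) = 0" using h by simp_all
    then have "rt * s = 0" "rt * (\<i> * t) = 0" by (simp_all add: Nv algebra_simps)
    then show False using st by simp
  qed
qed

lemma hu: "\<exists>w. Yz z w = 0 \<and> Yz z (Ncon *v w) = 0 \<and> Ncon *v w \<noteq> 0"
proof -
  define A where "A = z$(1,1) + z$(2,2)"
  define C where "C = z$(1,2) - z$(2,1)"
  define K where "K = z$(1,1) * (-A) + z$(1,2) * (\<i>*C)"
  show ?thesis
  proof (cases "A \<noteq> 0")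
    case True
    have qA: "(-K/A) * A = -K" using True by simp
    have gen: "z$(1,1) * (-A + q) + z$(1,2) * (\<i>*C + 0) - z$(2,1) * 0 + z$(2,2) * q = K + q * A" for q
      by (simp add: K_def A_def algebra_simps)
    show ?thesis
    proof (rule hu_gen[where s = "\<i>*C" and t = "-A" and p = 0 and q = "-K/A"])
      show "\<i> * C \<noteq> 0 \<or> - A \<noteq> 0" using True by simp
      show "z$(1,1) * (-A + -K/A) + z$(1,2) * (\<i>*C + 0) - z$(2,1) * 0 + z$(2,2) * (-K/A) = 0"
        using gen[of "-K/A"] qA by simp
      show "\<i> * C * (z $ (1, 1) + z $ (2, 2)) + \<i> * - A * (z $ (1, 2) - z $ (2, 1)) = 0"
        by (simp add: A_def C_def algebra_simps)
    qed
  next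
    case False
    then have A0: "A = 0" by simp
    show ?thesis
    proof (cases "C \<noteq> 0")
      case True
      define K2 where "K2 = z$(1,2) * (\<i>*C)"
      have pC: "(-K2/C) * C = -K2" using True by simp
      have gen2: "z$(1,1) * (0 + 0) + z$(1,2) * (\<i>*C + p) - z$(2,1) * p + z$(2,2) * 0 = K2 + p * C" for p
        by (simp add: K2_def C_def algebra_simps)
      show ?thesis
      proof (rule hu_gen[where s = "\<i>*C" and t = "0" and q = 0 and p = "-K2/C"])
        show "\<i> * C \<noteq> 0 \<or> (0::complex) \<noteq> 0" using True by simp
        show "z$(1,1) * (0 + 0) + z$(1,2) * (\<i>*C + -K2/C) - z$(2,1) * (-K2/C) + z$(2,2) * 0 = 0"
          using gen2[of "-K2/C"] pC by simp
        show "\<i> * C * (z $ (1, 1) + z $ (2, 2)) + \<i> * 0 * (z $ (1, 2) - z $ (2, 1)) = 0"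
          using A0 by (simp add: A_def)
      qed
    next
      case False
      then have C0: "C = 0" by simp
      show ?thesis
      proof (cases "z$(1,1) \<noteq> 0 \<or> z$(1,2) \<noteq> 0")
        case True
        show ?thesis
        proof (rule hu_gen[where s = "z$(1,1)" and t = "- z$(1,2)" and q = 0 and p = 0])
          show "z$(1,1) \<noteq> 0 \<or> - z$(1,2) \<noteq> 0" using True by simp
          show "z$(1,1) * (- z$(1,2) + 0) + z$(1,2) * (z$(1,1) + 0) - z$(2,1) * 0 + z$(2,2) * 0 = 0"
            by (simp add: algebra_simps)
          show "z$(1,1) * (z $ (1, 1) + z $ (2, 2)) + \<i> * - z$(1,2) * (z $ (1, 2) - z $ (2, 1)) = 0"
            using A0 C0 by (simp add: A_def C_def)
        qed
      next
        case False
        show ?thesis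
        proof (rule hu_gen[where s = 1 and t = 0 and q = 0 and p = 0])
          show "(1::complex) \<noteq> 0 \<or> (0::complex) \<noteq> 0" by simp
          show "z$(1,1) * (0 + 0) + z$(1,2) * (1 + 0) - z$(2,1) * 0 + z$(2,2) * 0 = 0"
            using False by simp
          show "1 * (z $ (1, 1) + z $ (2, 2)) + \<i> * 0 * (z $ (1, 2) - z $ (2, 1)) = 0"
            using A0 by (simp add: A_def)
        qed
      qed
    qed
  qed
qed



definition Aa :: "nat \<Rightarrow> complex^2^2" where
  "Aa j = (if j < 4 then mat2 (1/2) 0 0 0 else mat2 0 0 0 rt)"
definition Bb :: "nat \<Rightarrow> complex^2^2" where
  "Bb j = [I2, sigma1, sigma2, sigma3, I2, sigma2] ! j"
definition Cc :: "nat \<Rightarrow> complex^2^2" where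
  "Cc j = [I2, sigma1, sigma2, sigma3, sigma1, sigma3] ! j"

lemma sum6: "(\<Sum>j<6::nat. f j) = f 0 + f 1 + f 2 + f 3 + f 4 + (f 5 :: 'a::comm_monoid_add)"
  by (simp add: eval_nat_numeral)

lemma decomp6: "U6 = (\<Sum>j<6. tensor3 (Aa j) (Bb j) (Cc j))"
proof -
  have "\<forall>a1 b1 c1 a2 b2 c2. U6f (a1,b1,c1) (a2,b2,c2) =
     (\<Sum>j<6. Aa j $ a1 $ a2 * Bb j $ b1 $ b2 * Cc j $ c1 $ c2)"
    unfolding forall_2 sum6
    by (simp add: Aa_def Bb_def Cc_def I2_def sigma1_def sigma2_def sigma3_def mult_ac)
  then show ?thesis
    by (simp add: vec_eq_iff U6_entry tensor3_def)
qed

lemma tensor3_0: "tensor3 0 B C = 0" by (simp add: tensor3_def vec_eq_iff)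

lemma no5:
  fixes r :: nat and A B C :: "nat \<Rightarrow> complex^2^2"
  assumes r: "r \<le> 5" and dec: "U6 = (\<Sum>j<r. tensor3 (A j) (B j) (C j))"
  shows False
proof -
  define A' where "A' j = (if j < r then A j else 0)" for j
  have "(\<Sum>j<5. tensor3 (A' j) (B j) (C j)) = (\<Sum>j<5. if j < r then tensor3 (A j) (B j) (C j) else 0)"
    by (rule sum.cong) (auto simp: A'_def tensor3_0)
  also have "\<dots> = (\<Sum>j\<in>{j\<in>{..<5}. j < r}. tensor3 (A j) (B j) (C j))"
    by (rule sum.inter_filter[symmetric]) simp
  also have "{j\<in>{..<5::nat}. j < r} = {..<r}" using r by auto
  finally have dec5: "U6 = (\<Sum>j<5. tensor3 (A' j) (B j) (C j))" using dec by simp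
  have ent: "U6 $ i $ k = (\<Sum>j<5. A' j $ fst i $ fst k * B j $ fst (snd i) $ fst (snd k) * C j $ snd (snd i) $ snd (snd k))" for i k
    by (subst dec5) (simp add: tensor3_def)
  define x where "x j = (\<chi> u::2\<times>2. B j $ snd u $ fst u)" for j
  define y where "y j = (\<chi> v::2\<times>2. C j $ fst v $ snd v)" for j
  define al where "al j = A' j $ 1 $ 1" for j
  define be where "be j = A' j $ 2 $ 2" for j
  show False
  proof (rule core[where N = Ncon and x = x and y = y and al = al and be = be])
    show "CARD(2\<times>2) = 4" by simp
    show "(if u = v then 1 else 0) = (\<Sum>k<5. al k * x k $ u * y k $ v)" for u v :: "2\<times>2"
    proof -
      have "U6 $ (1, snd u, fst v) $ (1, fst u, snd v) = (if u = v then 1 else 0)"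
        by (cases u; cases v) (auto simp: U6_entry U6f_def)
      then show ?thesis using ent[of "(1, snd u, fst v)" "(1, fst u, snd v)"]
        by (simp add: al_def x_def y_def)
    qed
    show "Ncon $ u $ v = (\<Sum>k<5. be k * x k $ u * y k $ v)" for u v
      using ent[of "(2, snd u, fst v)" "(2, fst u, snd v)"]
      by (simp add: Ncon_def be_def x_def y_def)
    show "Ncon ** Ncon = 0" by (rule NN)
    show "\<exists>w. Yz z w = 0 \<and> Yz z (Ncon *v w) = 0 \<and> Ncon *v w \<noteq> 0" for z by (rule hu)
  qed
qed

theorem mainTheorem5:
  shows "unitary_mat U6 \<and> schmidt_rank U6 = 6"
proof
  show "unitary_mat U6" by (rule unitU6)
  show "schmidt_rank U6 = 6"
    unfolding schmidt_rank_def
  proof (rule Least_equality)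
    show "\<exists>A B C :: nat \<Rightarrow> complex^2^2. U6 = (\<Sum>j<6. tensor3 (A j) (B j) (C j))"
      using decomp6 by blast
    show "6 \<le> r" if "\<exists>A B C :: nat \<Rightarrow> complex^2^2. U6 = (\<Sum>j<r. tensor3 (A j) (B j) (C j))" for r
    proof (rule ccontr)
      assume "\<not> 6 \<le> r"
      then have "r \<le> 5" by simp
      with that show False using no5 by blast
    qed
  qed
qed


end
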